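(* For every algorithm $A$ for List Update with Time Windows there exists an algorithm $B$ such that for every input sequence $\sigma$: (1) whenever $B$ performs an access serving requests at some time $t$, at least one of the requests it serves at time $t$ has deadline exactly $t$; and (2) $B(\sigma)\le A(\sigma)$.
   Context: List Update with Time Windows. A set $\mathbb{E}$ of $n$ elements is kept in an ordered list (position $1$ is the head). An input $\sigma$ is a sequence of requests $r_1,\dots,r_m$; request $r_k$ specifies an element $e_k\in\mathbb{E}$, an arrival time $a_k$ and a deadline $q_k\ge a_k$. At any time an algorithm may (a) perform an access up to position $i$, at cost $i$, which serves every pending request whose element currently lies in positions $1,\dots,i$; (b) swap two adjacent elements at cost $1$. Actions are instantaneous. An algorithm is valid if it serves every request at some time in $[a_k,q_k]$. The cost $A(\sigma)$ of an algorithm $A$ on $\sigma$ is total access cost plus number of swaps. *)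

theory Defs
  imports Main "HOL.Real"
begin

text \<open>The list is an ordered list of distinct
elements (position 1 is the head).
A schedule (the behaviour of an algorithm on one input) is a finite list of timed
actions; times are nondecreasing and actions at the same time are executed in
list order.\<close>

datatype action = Access nat | Swap nat
  (* Access i : access up to position i (cost i);
     Swap i   : swap the elements at positions i and i+1 (cost 1) *)

type_synonym 'a request = "'a \<times> real \<times> real"
type_synonym schedule = "(real \<times> action) list"

definition elem :: "'a request \<Rightarrow> 'a" where "elem r = fst r"
definition arr :: "'a request \<Rightarrow> real" where "arr r = fst (snd r)"
definition dl :: "'a request \<Rightarrow> real" where "dl r = snd (snd r)"

text \<open>1-based position of an element in the list.\<close>
definition pos :: "'a \<Rightarrow> 'a list \<Rightarrow> nat" where
  "pos e L = Suc (LEAST i. i < length L \<and> L ! i = e)"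

fun apply_action :: "action \<Rightarrow> 'a list \<Rightarrow> 'a list" where
  "apply_action (Access i) L = L"
| "apply_action (Swap i) L = L[i - 1 := L ! i, i := L ! (i - 1)]"

text \<open>List configuration just before the j-th action (0-based) of schedule S.\<close>
definition config :: "'a list \<Rightarrow> schedule \<Rightarrow> nat \<Rightarrow> 'a list" where
  "config L0 S j = fold (apply_action \<circ> snd) (take j S) L0"

fun action_ok :: "nat \<Rightarrow> action \<Rightarrow> bool" where
  "action_ok n (Access i) = (1 \<le> i \<and> i \<le> n)"
| "action_ok n (Swap i) = (1 \<le> i \<and> i < n)"

definition sched_ok :: "nat \<Rightarrow> schedule \<Rightarrow> bool" where
  "sched_ok n S = (sorted (map fst S) \<and> (\<forall>x\<in>set S. action_ok n (snd x)))"

definition covers :: "'a list \<Rightarrow> schedule \<Rightarrow> 'a request \<Rightarrow> nat \<Rightarrow> bool" where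
  "covers L0 S r j = (j < length S \<and>
     (case snd (S ! j) of
        Access i \<Rightarrow> arr r \<le> fst (S ! j) \<and> pos (elem r) (config L0 S j) \<le> i
      | Swap _ \<Rightarrow> False))"

definition serves :: "'a list \<Rightarrow> schedule \<Rightarrow> 'a request \<Rightarrow> nat \<Rightarrow> bool" where
  "serves L0 S r j = (covers L0 S r j \<and> (\<forall>j'<j. \<not> covers L0 S r j'))"

definition valid :: "'a list \<Rightarrow> 'a request list \<Rightarrow> schedule \<Rightarrow> bool" where
  "valid L0 \<sigma> S = (sched_ok (length L0) S \<and>
     (\<forall>r\<in>set \<sigma>. \<exists>j. serves L0 S r j \<and> fst (S ! j) \<le> dl r))"

fun action_cost :: "action \<Rightarrow> nat" where
  "action_cost (Access i) = i"
| "action_cost (Swap i) = 1"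

definition cost :: "schedule \<Rightarrow> nat" where
  "cost S = sum_list (map (action_cost \<circ> snd) S)"

definition deadline_lazy :: "'a list \<Rightarrow> 'a request list \<Rightarrow> schedule \<Rightarrow> bool" where
  "deadline_lazy L0 \<sigma> S = (\<forall>j<length S.
     (\<exists>r\<in>set \<sigma>. serves L0 S r j) \<longrightarrow> (\<exists>r\<in>set \<sigma>. serves L0 S r j \<and> dl r = fst (S ! j)))"

definition wf_input :: "'a list \<Rightarrow> 'a request list \<Rightarrow> bool" where
  "wf_input L0 \<sigma> = (\<forall>r\<in>set \<sigma>. elem r \<in> set L0 \<and> arr r \<le> dl r)"

end

theory Submission
  imports Defs
begin


fun bef :: "'a list \<Rightarrow> 'a \<Rightarrow> 'a \<Rightarrow> bool" where
  "bef [] u v = False"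
| "bef (a#xs) u v = ((u = a \<and> v \<in> set xs) \<or> bef xs u v)"

lemma bef_set: "bef xs u v \<Longrightarrow> u \<in> set xs \<and> v \<in> set xs"
  by (induction xs) auto

lemma bef_append: "bef (xs@ys) u v = (bef xs u v \<or> bef ys u v \<or> (u \<in> set xs \<and> v \<in> set ys))"
  by (induction xs) auto

lemma bef_irrefl: "distinct xs \<Longrightarrow> \<not> bef xs u u"
  by (induction xs) (auto dest: bef_set)

lemma bef_asym: "distinct xs \<Longrightarrow> bef xs u v \<Longrightarrow> \<not> bef xs v u"
  by (induction xs) (auto dest: bef_set)

lemma bef_total: "u \<in> set xs \<Longrightarrow> v \<in> set xs \<Longrightarrow> u \<noteq> v \<Longrightarrow> bef xs u v \<or> bef xs v u"
  by (induction xs) auto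

lemma bef_trans: "distinct xs \<Longrightarrow> bef xs u v \<Longrightarrow> bef xs v w \<Longrightarrow> bef xs u w"
  by (induction xs) (auto dest: bef_set)

lemma bef_filter: "bef (filter p xs) u v = (p u \<and> p v \<and> bef xs u v)"
  by (induction xs) auto

lemma bef_swap:
  assumes "distinct (ys@a#b#zs)"
  shows "bef (ys@b#a#zs) u v = (if (u,v) = (b,a) then True else if (u,v) = (a,b) then False
            else bef (ys@a#b#zs) u v)"
  using assms by (auto simp: bef_append dest: bef_set)

lemma swap_at: "apply_action (Swap (Suc (length ys))) (ys@a#b#zs) = ys@b#a#zs"
  by (simp add: list_update_append nth_append)

lemma decomp3: "Suc k < length x \<Longrightarrow> x = take k x @ x!k # x!(Suc k) # drop (Suc (Suc k)) x"
  by (metis Cons_nth_drop_Suc Suc_lessD append_take_drop_id)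

lemma swap_decomp:
  assumes "1 \<le> i" "i < length x"
  shows "x = take (i-1) x @ x!(i-1) # x!i # drop (Suc i) x \<and>
         apply_action (Swap i) x = take (i-1) x @ x!i # x!(i-1) # drop (Suc i) x"
proof -
  obtain k where k: "i = Suc k" using assms by (cases i) auto
  have l: "length (take k x) = k" using assms k by simp
  have 1: "x = take k x @ x!k # x!(Suc k) # drop (Suc (Suc k)) x" using decomp3 assms k by simp
  have "apply_action (Swap i) x = apply_action (Swap (Suc (length (take k x)))) (take k x @ x!k # x!(Suc k) # drop (Suc (Suc k)) x)"
    using l k 1 by simp
  also have "\<dots> = take k x @ x!(Suc k) # x!k # drop (Suc (Suc k)) x" by (rule swap_at)
  finally show ?thesis using 1 k by simp
qed



definition invc :: "'a list \<Rightarrow> 'a list \<Rightarrow> nat" where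
  "invc x y = card {(u,v). bef x u v \<and> bef y v u}"

lemma invc_set_sub: "{(u,v). bef x u v \<and> bef y v u} \<subseteq> set x \<times> set x"
  by (auto dest: bef_set)

lemma invc_fin: "finite {(u,v). bef x u v \<and> bef y v u}"
  by (rule finite_subset[OF invc_set_sub]) auto

lemma invc_self: "distinct x \<Longrightarrow> invc x x = 0"
proof -
  assume d: "distinct x"
  have e: "{(u,v). bef x u v \<and> bef x v u} = {}" using bef_asym[OF d] by auto
  show ?thesis unfolding invc_def e by simp
qed

lemma bef_sw_other:
  assumes "distinct (ys@a#b#zs)" "\<not> (u = a \<and> v = b)" "\<not> (u = b \<and> v = a)"
  shows "bef (ys@b#a#zs) u v = bef (ys@a#b#zs) u v"
  using bef_swap[OF assms(1), of u v] assms(2,3) by auto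

lemma bef_sw_facts:
  assumes "distinct (ys@a#b#zs)"
  shows "bef (ys@a#b#zs) a b" "\<not> bef (ys@a#b#zs) b a" "bef (ys@b#a#zs) b a" "\<not> bef (ys@b#a#zs) a b"
  using bef_swap[OF assms(1), of a b] bef_swap[OF assms(1), of b a] assms
  by (auto simp: bef_append dest: bef_set)

lemma invc_swap2:
  assumes dx: "distinct (ys@a#b#zs)" and dc: "distinct c" and s: "set c = set (ys@a#b#zs)"
  shows "(bef c a b \<and> invc c (ys@b#a#zs) = Suc (invc c (ys@a#b#zs))) \<or>
         (bef c b a \<and> invc c (ys@a#b#zs) = Suc (invc c (ys@b#a#zs)))"
proof -
  let ?x = "ys@a#b#zs" and ?x' = "ys@b#a#zs"
  let ?E = "{(u,v). bef c u v \<and> bef ?x v u}" and ?E' = "{(u,v). bef c u v \<and> bef ?x' v u}"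
  have ab: "a \<noteq> b" "a \<in> set c" "b \<in> set c" using dx s by auto
  note F = bef_sw_facts[OF dx]
  note O = bef_sw_other[OF dx]
  from bef_total[OF ab(2,3,1)] show ?thesis
  proof
    assume c: "bef c a b"
    have nc: "\<not> bef c b a" using bef_asym[OF dc c] .
    have "?E' = insert (a,b) ?E"
    proof (rule set_eqI)
      fix p :: "'a \<times> 'a"
      obtain u v where p: "p = (u,v)" by (cases p)
      show "p \<in> ?E' \<longleftrightarrow> p \<in> insert (a,b) ?E"
      proof (cases "(u = a \<and> v = b) \<or> (u = b \<and> v = a)")
        case True then show ?thesis using p c nc F by auto
      next
        case False then have "bef ?x' v u = bef ?x v u" using O[of v u] by blast
        then show ?thesis using p False by auto
      qed
    qed
    moreover have "(a,b) \<notin> ?E" using F by auto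
    ultimately have "card ?E' = Suc (card ?E)" using invc_fin[of c ?x] by simp
    then show ?thesis using c unfolding invc_def by blast
  next
    assume c: "bef c b a"
    have nc: "\<not> bef c a b" using bef_asym[OF dc c] .
    have "?E = insert (b,a) ?E'"
    proof (rule set_eqI)
      fix p :: "'a \<times> 'a"
      obtain u v where p: "p = (u,v)" by (cases p)
      show "p \<in> ?E \<longleftrightarrow> p \<in> insert (b,a) ?E'"
      proof (cases "(u = a \<and> v = b) \<or> (u = b \<and> v = a)")
        case True then show ?thesis using p c nc F by auto
      next
        case False then have "bef ?x' v u = bef ?x v u" using O[of v u] by blast
        then show ?thesis using p False by auto
      qed
    qed
    moreover have "(b,a) \<notin> ?E'" using F by auto
    ultimately have "card ?E = Suc (card ?E')" using invc_fin[of c ?x'] by simp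
    then show ?thesis using c unfolding invc_def by blast
  qed
qed

lemma invc_swap1:
  assumes dx: "distinct (ys@a#b#zs)" and y: "bef y b a" "distinct y"
  shows "invc (ys@a#b#zs) y = Suc (invc (ys@b#a#zs) y)"
proof -
  let ?x = "ys@a#b#zs" and ?x' = "ys@b#a#zs"
  let ?E = "{(u,v). bef ?x u v \<and> bef y v u}" and ?E' = "{(u,v). bef ?x' u v \<and> bef y v u}"
  note F = bef_sw_facts[OF dx]
  note O = bef_sw_other[OF dx]
  have ny: "\<not> bef y a b" using bef_asym[OF y(2) y(1)] .
  have "?E = insert (a,b) ?E'"
  proof (rule set_eqI)
    fix p :: "'a \<times> 'a"
    obtain u v where p: "p = (u,v)" by (cases p)
    show "p \<in> ?E \<longleftrightarrow> p \<in> insert (a,b) ?E'"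
    proof (cases "(u = a \<and> v = b) \<or> (u = b \<and> v = a)")
      case True then show ?thesis using p y ny F by auto
    next
      case False then have "bef ?x' u v = bef ?x u v" using O[of u v] by blast
      then show ?thesis using p False by auto
    qed
  qed
  moreover have "(a,b) \<notin> ?E'" using F by auto
  ultimately have "card ?E = Suc (card ?E')" using invc_fin[of ?x' y] by simp
  then show ?thesis unfolding invc_def .
qed



lemma adj_sorted:
  assumes "distinct y" "set x \<subseteq> set y" "distinct x"
    "\<And>ys a b zs. x = ys@a#b#zs \<Longrightarrow> bef y a b"
  shows "sorted_wrt (bef y) x"
  using assms
proof (induction x)
  case Nil then show ?case by simp
next
  case (Cons a x')
  have IH: "sorted_wrt (bef y) x'"
  proof (rule Cons.IH)
    show "distinct y" "set x' \<subseteq> set y" "distinct x'" using Cons.prems by auto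
    fix ys a' b zs assume "x' = ys@a'#b#zs"
    then show "bef y a' b" using Cons.prems(4)[of "a#ys" a' b zs] by simp
  qed
  show ?case
  proof (cases x')
    case Nil then show ?thesis by simp
  next
    case (Cons b rest)
    have ab: "bef y a b" using Cons.prems(4)[of "[]" a b rest] Cons by simp
    have "\<forall>c\<in>set rest. bef y b c" using IH Cons by simp
    then have "\<forall>c\<in>set x'. bef y a c"
      using ab Cons bef_trans[OF assms(1) ab] by auto
    then show ?thesis using IH by simp
  qed
qed

lemma sorted_bef_eq:
  assumes "sorted_wrt (bef y) x" "distinct y" "distinct x" "set x = set y"
  shows "x = y"
  using assms
proof (induction x arbitrary: y)
  case Nil then show ?case by simp
next
  case (Cons a x')
  obtain b y' where y: "y = b#y'" using Cons.prems(4) by (cases y) auto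
  have dy: "distinct y'" "b \<notin> set y'" using Cons.prems(2) y by auto
  have dx: "distinct x'" "a \<notin> set x'" using Cons.prems(3) by auto
  have sx: "\<forall>c\<in>set x'. bef y a c" "sorted_wrt (bef y) x'" using Cons.prems(1) by auto
  have ab: "a = b"
  proof (rule ccontr)
    assume nab: "a \<noteq> b"
    have "b \<in> set (a#x')" using Cons.prems(4) y by simp
    then have "b \<in> set x'" using nab by simp
    then have "bef y a b" using sx by blast
    then have "bef y' a b" using y nab by simp
    then have "b \<in> set y'" using bef_set by metis
    then show False using dy by simp
  qed
  have s: "set x' = set y'"
  proof -
    have "insert a (set x') = insert a (set y')" using Cons.prems(4) y ab by simp
    then show ?thesis using dx dy ab by (metis insert_ident)
  qed
  have "sorted_wrt (bef y') x'"
  proof (rule sorted_wrt_mono_rel[OF _ sx(2)])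
    fix u v assume "u \<in> set x'" "v \<in> set x'" "bef y u v"
    then show "bef y' u v" using y ab dx by auto
  qed
  then have "x' = y'" using Cons.IH s dx dy by blast
  then show ?case using y ab by simp
qed

lemma adj_inv_exists:
  assumes "distinct x" "distinct y" "set x = set y" "x \<noteq> y"
  shows "\<exists>ys a b zs. x = ys@a#b#zs \<and> bef y b a"
proof (rule ccontr)
  assume n: "\<not> ?thesis"
  have adj: "\<And>ys a b zs. x = ys@a#b#zs \<Longrightarrow> bef y a b"
  proof -
    fix ys a b zs assume x: "x = ys@a#b#zs"
    have 1: "a \<noteq> b" "a \<in> set y" "b \<in> set y" using assms(1,3) x by auto
    have 2: "\<not> bef y b a" using n x by blast
    show "bef y a b" using bef_total[OF 1(2,3,1)] 2 by blast
  qed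
  have "sorted_wrt (bef y) x"
    by (rule adj_sorted[OF assms(2) _ assms(1) adj]) (simp add: assms(3))
  then have "x = y" by (rule sorted_bef_eq[OF _ assms(2,1,3)])
  then show False using assms(4) by simp
qed

definition swaps_ok :: "nat \<Rightarrow> action list \<Rightarrow> bool" where
  "swaps_ok n \<beta> = (\<forall>a\<in>set \<beta>. \<exists>i. a = Swap i \<and> 1 \<le> i \<and> i < n)"

lemma sort_swaps:
  "distinct x \<Longrightarrow> distinct y \<Longrightarrow> set x = set y \<Longrightarrow>
   \<exists>\<beta>. swaps_ok (length x) \<beta> \<and> fold apply_action \<beta> x = y \<and> length \<beta> \<le> invc x y"
proof (induction "invc x y" arbitrary: x rule: less_induct)
  case less
  show ?case
  proof (cases "x = y")
    case True then show ?thesis by (intro exI[of _ "[]"]) (simp add: swaps_ok_def)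
  next
    case False
    then obtain ys a b zs where x: "x = ys@a#b#zs" and y: "bef y b a"
      using adj_inv_exists less.prems by blast
    let ?x' = "ys@b#a#zs"
    have i: "invc x y = Suc (invc ?x' y)" using invc_swap1 less.prems x y by simp
    have "distinct ?x'" "set ?x' = set y" using less.prems x by auto
    then obtain \<beta> where b: "swaps_ok (length ?x') \<beta>" "fold apply_action \<beta> ?x' = y" "length \<beta> \<le> invc ?x' y"
      using less.hyps[of ?x'] i less.prems by auto
    have sa: "apply_action (Swap (Suc (length ys))) x = ?x'" using x swap_at by simp
    have l: "length ?x' = length x" using x by simp
    have "swaps_ok (length x) (Swap (Suc (length ys)) # \<beta>)"
      using b(1) l x unfolding swaps_ok_def by auto
    moreover have "fold apply_action (Swap (Suc (length ys)) # \<beta>) x = y" using sa b(2) by simp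
    moreover have "length (Swap (Suc (length ys)) # \<beta>) \<le> invc x y" using b(3) i by simp
    ultimately show ?thesis by blast
  qed
qed



fun cov :: "action list \<Rightarrow> 'a list \<Rightarrow> 'a set" where
  "cov [] x = {}"
| "cov (a#\<alpha>) x = (case a of Access i \<Rightarrow> set (take i x) | Swap i \<Rightarrow> {}) \<union> cov \<alpha> (apply_action a x)"

definition Qs :: "'a list \<Rightarrow> 'a list \<Rightarrow> 'a set \<Rightarrow> 'a set" where
  "Qs c x W = {z. \<exists>w\<in>W. z = w \<or> (bef c z w \<and> bef x z w)}"

lemma Qs_sub: "Qs c x W \<subseteq> W \<union> set c"
  unfolding Qs_def by (auto dest: bef_set)

lemma Qs_fin: "finite W \<Longrightarrow> finite (Qs c x W)"
  by (rule finite_subset[OF Qs_sub]) auto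

lemma bef_take: "distinct x \<Longrightarrow> bef x z w \<Longrightarrow> w \<in> set (take i x) \<Longrightarrow> z \<in> set (take i x)"
proof -
  assume d: "distinct x" and b: "bef x z w" and w: "w \<in> set (take i x)"
  have "w \<notin> set (drop i x)" using d w by (metis set_take_disj_set_drop_if_distinct disjoint_iff order_refl)
  moreover have "bef (take i x @ drop i x) z w" using b by simp
  ultimately show ?thesis unfolding bef_append by (auto dest: bef_set)
qed

lemma apply_ok:
  assumes "action_ok (length x) a"
  shows "length (apply_action a x) = length x \<and> set (apply_action a x) = set x \<and>
         (distinct x \<longrightarrow> distinct (apply_action a x))"
proof (cases a)
  case (Access i) then show ?thesis by simp
next
  case (Swap i)
  then have i: "1 \<le> i" "i < length x" using assms by auto
  from swap_decomp[OF i] obtain ys a' b zs where "x = ys@a'#b#zs" "apply_action (Swap i) x = ys@b#a'#zs"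
    by blast
  then show ?thesis using Swap by auto
qed

lemma swap_step:
  assumes dc: "distinct c" and dx: "distinct (ys@a#b#zs)" and s: "set c = set (ys@a#b#zs)" and fW: "finite W"
  shows "invc c (ys@b#a#zs) + card (Qs c (ys@b#a#zs) W) \<le> invc c (ys@a#b#zs) + card (Qs c (ys@a#b#zs) W) + 1"
proof -
  let ?x = "ys@a#b#zs" and ?x' = "ys@b#a#zs"
  note F = bef_sw_facts[OF dx]
  note O = bef_sw_other[OF dx]
  from invc_swap2[OF dx dc s] show ?thesis
  proof
    assume h: "bef c a b \<and> invc c ?x' = Suc (invc c ?x)"
    have nc: "\<not> bef c b a" using bef_asym[OF dc] h by blast
    have "Qs c ?x' W \<subseteq> Qs c ?x W"
    proof
      fix z assume "z \<in> Qs c ?x' W"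
      then obtain w where w: "w \<in> W" "z = w \<or> (bef c z w \<and> bef ?x' z w)" unfolding Qs_def by blast
      show "z \<in> Qs c ?x W"
      proof (cases "z = w")
        case True then show ?thesis using w unfolding Qs_def by blast
      next
        case False
        then have bz: "bef c z w" "bef ?x' z w" using w by auto
        have "\<not> (z = a \<and> w = b)" using bz F by blast
        moreover have "\<not> (z = b \<and> w = a)" using bz nc by blast
        ultimately have "bef ?x z w" using O[of z w] bz by simp
        then show ?thesis using w bz unfolding Qs_def by blast
      qed
    qed
    then have "card (Qs c ?x' W) \<le> card (Qs c ?x W)" using Qs_fin[OF fW] by (rule card_mono[rotated])
    then show ?thesis using h by simp
  next
    assume h: "bef c b a \<and> invc c ?x = Suc (invc c ?x')"
    have "Qs c ?x' W \<subseteq> insert b (Qs c ?x W)"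
    proof
      fix z assume "z \<in> Qs c ?x' W"
      then obtain w where w: "w \<in> W" "z = w \<or> (bef c z w \<and> bef ?x' z w)" unfolding Qs_def by blast
      show "z \<in> insert b (Qs c ?x W)"
      proof (cases "z = w")
        case True then show ?thesis using w unfolding Qs_def by blast
      next
        case False
        then have bz: "bef c z w" "bef ?x' z w" using w by auto
        show ?thesis
        proof (cases "z = b")
          case True then show ?thesis by simp
        next
          case False
          have "\<not> (z = a \<and> w = b)" using bz F by blast
          then have "bef ?x z w" using O[of z w] bz False by simp
          then show ?thesis using w bz unfolding Qs_def by blast
        qed
      qed
    qed
    then have "card (Qs c ?x' W) \<le> card (insert b (Qs c ?x W))" using Qs_fin[OF fW] by (intro card_mono) auto
    also have "\<dots> \<le> Suc (card (Qs c ?x W))" by (simp add: card_insert_if Qs_fin[OF fW])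
    finally show ?thesis using h by simp
  qed
qed

lemma access_step:
  assumes "distinct x" "finite W"
  shows "card (Qs c x (W \<union> set (take i x))) \<le> card (Qs c x W) + i"
proof -
  have "Qs c x (W \<union> set (take i x)) \<subseteq> Qs c x W \<union> set (take i x)"
  proof
    fix z assume "z \<in> Qs c x (W \<union> set (take i x))"
    then obtain w where w: "w \<in> W \<union> set (take i x)" "z = w \<or> (bef c z w \<and> bef x z w)" unfolding Qs_def by blast
    show "z \<in> Qs c x W \<union> set (take i x)"
    proof (cases "w \<in> W")
      case True then show ?thesis using w unfolding Qs_def by blast
    next
      case False then have wt: "w \<in> set (take i x)" using w by blast
      then show ?thesis using w bef_take[OF assms(1) _ wt] by blast
    qed
  qed
  then have "card (Qs c x (W \<union> set (take i x))) \<le> card (Qs c x W \<union> set (take i x))"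
    using Qs_fin[OF assms(2)] by (intro card_mono) auto
  also have "\<dots> \<le> card (Qs c x W) + card (set (take i x))" by (rule card_Un_le)
  also have "card (set (take i x)) \<le> i"
    by (metis card_length length_take min.bounded_iff order_refl)
  finally show ?thesis by simp
qed

lemma window_gen:
  "distinct c \<Longrightarrow> distinct x \<Longrightarrow> set x = set c \<Longrightarrow> finite W \<Longrightarrow> \<forall>a\<in>set \<alpha>. action_ok (length x) a \<Longrightarrow>
   invc c (fold apply_action \<alpha> x) + card (Qs c (fold apply_action \<alpha> x) (W \<union> cov \<alpha> x))
     \<le> invc c x + card (Qs c x W) + sum_list (map action_cost \<alpha>)"
proof (induction \<alpha> arbitrary: x W)
  case Nil then show ?case by simp
next
  case (Cons a \<alpha>)
  let ?x' = "apply_action a x"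
  have ok: "action_ok (length x) a" using Cons.prems(5) by simp
  have p: "length ?x' = length x" "set ?x' = set x" "distinct ?x'" using apply_ok[OF ok] Cons.prems(2) by auto
  show ?case
  proof (cases a)
    case (Access i)
    have x': "?x' = x" using Access by simp
    have f: "finite (W \<union> set (take i x))" using Cons.prems(4) by simp
    have IH: "invc c (fold apply_action \<alpha> x) + card (Qs c (fold apply_action \<alpha> x) ((W \<union> set (take i x)) \<union> cov \<alpha> x))
     \<le> invc c x + card (Qs c x (W \<union> set (take i x))) + sum_list (map action_cost \<alpha>)"
      using Cons.IH[OF Cons.prems(1,2,3) f] Cons.prems(5) by simp
    have e: "W \<union> cov (a#\<alpha>) x = (W \<union> set (take i x)) \<union> cov \<alpha> x" using Access by auto
    show ?thesis using IH access_step[OF Cons.prems(2,4), of c i] e Access by simp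
  next
    case (Swap i)
    then have i: "1 \<le> i" "i < length x" using ok by auto
    from swap_decomp[OF i] obtain ys a' b zs where xd: "x = ys@a'#b#zs" "?x' = ys@b#a'#zs"
      using Swap by blast
    have IH: "invc c (fold apply_action \<alpha> ?x') + card (Qs c (fold apply_action \<alpha> ?x') (W \<union> cov \<alpha> ?x'))
     \<le> invc c ?x' + card (Qs c ?x' W) + sum_list (map action_cost \<alpha>)"
      using Cons.IH[OF Cons.prems(1) p(3) _ Cons.prems(4)] p Cons.prems(3,5) by simp
    have st: "invc c ?x' + card (Qs c ?x' W) \<le> invc c x + card (Qs c x W) + 1"
      using swap_step[OF Cons.prems(1), of ys a' b zs W] xd Cons.prems(2,3,4) by simp
    have e: "W \<union> cov (a#\<alpha>) x = W \<union> cov \<alpha> ?x'" using Swap by simp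
    show ?thesis using IH st e Swap by simp
  qed
qed

lemma window:
  assumes "distinct c" "\<forall>a\<in>set \<alpha>. action_ok (length c) a"
  shows "invc c (fold apply_action \<alpha> c) + card (Qs c (fold apply_action \<alpha> c) (cov \<alpha> c))
     \<le> sum_list (map action_cost \<alpha>)"
proof -
  have "Qs c c {} = {}" unfolding Qs_def by simp
  then show ?thesis using window_gen[OF assms(1,1) refl finite.emptyI assms(2)] invc_self[OF assms(1)] by simp
qed



definition mpart :: "'a set \<Rightarrow> 'a list \<Rightarrow> 'a list" where
  "mpart P c' = filter (\<lambda>z. z \<in> P) c' @ filter (\<lambda>z. z \<notin> P) c'"

lemma Qs_down:
  assumes "distinct c" "distinct c'" "bef c u v" "bef c' u v" "v \<in> Qs c c' W"
  shows "u \<in> Qs c c' W"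
proof -
  obtain w where w: "w \<in> W" "v = w \<or> (bef c v w \<and> bef c' v w)" using assms(5) unfolding Qs_def by blast
  show ?thesis
  proof (cases "v = w")
    case True then show ?thesis using w assms(3,4) unfolding Qs_def by blast
  next
    case False
    then have "bef c u w" "bef c' u w" using w assms bef_trans by metis+
    then show ?thesis using w unfolding Qs_def by blast
  qed
qed

lemma mpart_props:
  assumes "distinct c'"
  shows "distinct (mpart P c')" "set (mpart P c') = set c'" "length (mpart P c') = length c'"
    "P \<subseteq> set c' \<Longrightarrow> set (take (card P) (mpart P c')) = P"
proof -
  show "distinct (mpart P c')" using assms unfolding mpart_def by auto
  show "set (mpart P c') = set c'" unfolding mpart_def by auto
  show "length (mpart P c') = length c'" unfolding mpart_def
    by (metis length_append sum_length_filter_compl)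
  assume "P \<subseteq> set c'"
  then have sP: "set (filter (\<lambda>z. z \<in> P) c') = P" by auto
  have "length (filter (\<lambda>z. z \<in> P) c') = card P"
    using distinct_card[of "filter (\<lambda>z. z \<in> P) c'"] assms sP by simp
  then have "take (card P) (mpart P c') = filter (\<lambda>z. z \<in> P) c'" unfolding mpart_def by simp
  then show "set (take (card P) (mpart P c')) = P" using sP by simp
qed

lemma bef_mpart: "bef (mpart P c') u v =
   ((u \<in> P \<and> v \<in> P \<and> bef c' u v) \<or> (u \<notin> P \<and> v \<notin> P \<and> bef c' u v) \<or>
    (u \<in> P \<and> u \<in> set c' \<and> v \<notin> P \<and> v \<in> set c'))"
  unfolding mpart_def bef_append bef_filter by auto

lemma partition_inv:
  assumes dc: "distinct c" and dc': "distinct c'" and s: "set c' = set c" and P: "P = Qs c c' W"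
  shows "invc c (mpart P c') + invc (mpart P c') c' \<le> invc c c'"
proof -
  let ?m = "mpart P c'"
  let ?I1 = "{(u,v). bef c u v \<and> bef ?m v u}" and ?I2 = "{(u,v). bef ?m u v \<and> bef c' v u}"
    and ?I0 = "{(u,v). bef c u v \<and> bef c' v u}"
  have dm: "distinct ?m" using mpart_props(1)[OF dc'] .
  have disj: "?I1 \<inter> ?I2 = {}" using bef_asym[OF dm] by auto
  have sub1: "?I1 \<subseteq> ?I0"
  proof
    fix p assume "p \<in> ?I1"
    then obtain u v where p: "p = (u,v)" and b: "bef c u v" "bef ?m v u" by blast
    have uv: "u \<in> set c" "v \<in> set c" "u \<noteq> v" using b(1) bef_set bef_irrefl[OF dc] by metis+
    have "bef c' v u"
    proof (cases "v \<in> P \<and> u \<notin> P")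
      case True
      show ?thesis
      proof (rule ccontr)
        assume "\<not> bef c' v u"
        then have "bef c' u v" using bef_total[of u c' v] uv s by auto
        then have "u \<in> P" using Qs_down[OF dc dc' b(1)] True P by blast
        then show False using True by blast
      qed
    next
      case False then show ?thesis using b(2) unfolding bef_mpart by blast
    qed
    then show "p \<in> ?I0" using p b by blast
  qed
  have sub2: "?I2 \<subseteq> ?I0"
  proof
    fix p assume "p \<in> ?I2"
    then obtain u v where p: "p = (u,v)" and b: "bef ?m u v" "bef c' v u" by blast
    have uv: "u \<in> set c" "v \<in> set c" "u \<noteq> v" using b(2) bef_set bef_irrefl[OF dc'] s by metis+
    have na: "\<not> bef c' u v" using bef_asym[OF dc' b(2)] .
    have cs: "u \<in> P" "v \<notin> P" using b(1) na unfolding bef_mpart by blast+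
    have "bef c u v"
    proof (rule ccontr)
      assume "\<not> bef c u v"
      then have "bef c v u" using bef_total[of u c v] uv by auto
      then have "v \<in> P" using Qs_down[OF dc dc' _ b(2)] cs P by blast
      then show False using cs by blast
    qed
    then show "p \<in> ?I0" using p b by blast
  qed
  have "card ?I1 + card ?I2 = card (?I1 \<union> ?I2)"
    using disj invc_fin[of c ?m] invc_fin[of ?m c'] by (simp add: card_Un_disjoint)
  also have "\<dots> \<le> card ?I0" using sub1 sub2 invc_fin[of c c'] by (intro card_mono) auto
  finally show ?thesis unfolding invc_def .
qed



lemma fold_ok:
  "\<forall>a\<in>set as. action_ok (length x) a \<Longrightarrow>
   length (fold apply_action as x) = length x \<and> set (fold apply_action as x) = set x \<and>
   (distinct x \<longrightarrow> distinct (fold apply_action as x))"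
proof (induction as arbitrary: x)
  case Nil then show ?case by simp
next
  case (Cons a as)
  have ok: "action_ok (length x) a" using Cons.prems by simp
  note p = apply_ok[OF ok]
  have "\<forall>b\<in>set as. action_ok (length (apply_action a x)) b" using Cons.prems p by simp
  from Cons.IH[OF this] p show ?case by simp
qed

lemma config_fold: "config L0 S k = fold apply_action (map snd (take k S)) L0"
  unfolding config_def by (simp add: fold_map)

lemma config_props:
  assumes "sched_ok (length L0) S" "distinct L0"
  shows "length (config L0 S k) = length L0 \<and> set (config L0 S k) = set L0 \<and> distinct (config L0 S k)"
proof -
  have a: "\<forall>x\<in>set S. action_ok (length L0) (snd x)" using assms(1) unfolding sched_ok_def by blast
  have "\<forall>a\<in>set (map snd (take k S)). action_ok (length L0) a"
  proof
    fix a assume "a \<in> set (map snd (take k S))"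
    then obtain x where xk: "x \<in> set (take k S)" "a = snd x" by auto
    from xk(1) have "x \<in> set S" by (rule in_set_takeD)
    then show "action_ok (length L0) a" using a \<open>a = snd x\<close> by blast
  qed
  note f = fold_ok[OF this]
  have e: "config L0 S k = fold apply_action (map snd (take k S)) L0" by (rule config_fold)
  show ?thesis unfolding e using f assms(2) by simp
qed


lemma take_split: "Np \<le> N \<Longrightarrow> take N S = take Np S @ drop Np (take N S)"
  by (metis append_take_drop_id min.absorb1 take_take)

lemma config_window:
  assumes "Np \<le> k" "k \<le> N"
  shows "config L0 S k = fold apply_action (take (k - Np) (map snd (drop Np (take N S)))) (config L0 S Np)"
proof -
  have k: "k = Np + (k - Np)" using assms by simp
  have 1: "take k S = take Np S @ take (k - Np) (drop Np S)" by (subst k) (rule take_add)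
  have 2: "take (k - Np) (drop Np (take N S)) = take (k - Np) (drop Np S)"
    using assms by (simp add: drop_take min_def)
  have "take k S = take Np S @ take (k - Np) (drop Np (take N S))" using 1 2 by simp
  then show ?thesis unfolding config_fold by (simp add: take_map[symmetric] drop_map[symmetric])
qed


lemma cov_take:
  "j < length \<alpha> \<Longrightarrow> \<alpha>!j = Access i \<Longrightarrow> set (take i (fold apply_action (take j \<alpha>) x)) \<subseteq> cov \<alpha> x"
proof (induction \<alpha> arbitrary: x j)
  case Nil then show ?case by simp
next
  case (Cons a \<alpha>)
  show ?case
  proof (cases j)
    case 0 then show ?thesis using Cons.prems by simp
  next
    case (Suc j')
    then have "set (take i (fold apply_action (take j' \<alpha>) (apply_action a x))) \<subseteq> cov \<alpha> (apply_action a x)"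
      using Cons.prems by (intro Cons.IH) auto
    then show ?thesis using Suc by auto
  qed
qed

lemma pos_le_take: "e \<in> set x \<Longrightarrow> pos e x \<le> i \<Longrightarrow> e \<in> set (take i x)"
proof -
  assume e: "e \<in> set x" and p: "pos e x \<le> i"
  from e obtain k where k: "k < length x" "x!k = e" by (auto simp: in_set_conv_nth)
  let ?l = "LEAST k. k < length x \<and> x!k = e"
  have l: "?l < length x \<and> x!?l = e" using LeastI[of "\<lambda>k. k < length x \<and> x!k = e" k] k by blast
  have li: "?l < i" using p unfolding pos_def by simp
  have "take i x ! ?l = e" using l li by simp
  moreover have "?l < length (take i x)" using l li by simp
  ultimately show ?thesis by (metis nth_mem)
qed


lemma take_pos_le: "e \<in> set (take i x) \<Longrightarrow> pos e x \<le> i"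
proof -
  assume e: "e \<in> set (take i x)"
  from e obtain k where k: "k < length (take i x)" "(take i x)!k = e" by (auto simp: in_set_conv_nth)
  then have k': "k < length x \<and> x!k = e" "k < i" by auto
  have "(LEAST k. k < length x \<and> x!k = e) \<le> k" using k'(1) by (rule Least_le)
  then show ?thesis unfolding pos_def using k'(2) by simp
qed


definition NA :: "schedule \<Rightarrow> real \<Rightarrow> nat" where
  "NA S \<tau> = length (takeWhile (\<lambda>a. fst a \<le> \<tau>) S)"

lemma NA_le_len: "NA S \<tau> \<le> length S"
  unfolding NA_def by (rule length_takeWhile_le)

lemma NA_time: "k < NA S \<tau> \<Longrightarrow> fst (S!k) \<le> \<tau>"
proof -
  assume k: "k < NA S \<tau>"
  then have "takeWhile (\<lambda>a. fst a \<le> \<tau>) S ! k = S ! k" unfolding NA_def by (rule takeWhile_nth)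
  moreover have "takeWhile (\<lambda>a. fst a \<le> \<tau>) S ! k \<in> set (takeWhile (\<lambda>a. fst a \<le> \<tau>) S)"
    using k unfolding NA_def by simp
  ultimately show ?thesis by (metis (mono_tags, lifting) set_takeWhileD)
qed

lemma NA_ge:
  assumes s: "sorted (map fst S)" and k: "k < length S" "fst (S!k) \<le> \<tau>"
  shows "k < NA S \<tau>"
proof (rule ccontr)
  assume "\<not> k < NA S \<tau>"
  then have le: "NA S \<tau> \<le> k" by simp
  then have l: "NA S \<tau> < length S" using k by simp
  have "\<not> fst (S ! NA S \<tau>) \<le> \<tau>" using nth_length_takeWhile[of "\<lambda>a. fst a \<le> \<tau>" S] l unfolding NA_def by simp
  moreover have "fst (S ! NA S \<tau>) \<le> fst (S!k)"
    using sorted_nth_mono[OF s, of "NA S \<tau>" k] le k by simp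
  ultimately show False using k by simp
qed

lemma NA_mono:
  assumes s: "sorted (map fst S)" and t: "\<tau> \<le> \<tau>'"
  shows "NA S \<tau> \<le> NA S \<tau>'"
proof (rule ccontr)
  assume "\<not> ?thesis"
  then have "NA S \<tau>' < NA S \<tau>" by simp
  then have "fst (S ! NA S \<tau>') \<le> \<tau>'" using NA_time[of "NA S \<tau>'" S \<tau>] t by simp
  moreover have "NA S \<tau>' < length S" using \<open>NA S \<tau>' < NA S \<tau>\<close> NA_le_len[of S \<tau>] by simp
  ultimately have "NA S \<tau>' < NA S \<tau>'" using NA_ge[OF s] by blast
  then show False by simp
qed

lemma cost_append: "cost (xs @ ys) = cost xs + cost ys"
  unfolding cost_def by simp

lemma cost_window: "Np \<le> N \<Longrightarrow> cost (take N S) = cost (take Np S) + sum_list (map action_cost (map snd (drop Np (take N S))))"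
  using take_split[of Np N S] unfolding cost_def by (metis cost_def cost_append map_map)

lemma cost_take_le: "cost (take N S) \<le> cost S"
proof -
  have "cost S = cost (take N S) + cost (drop N S)" by (metis append_take_drop_id cost_append)
  then show ?thesis by simp
qed

lemma cost_map_time: "cost (map (\<lambda>a. (\<tau>, a)) \<beta>) = sum_list (map action_cost \<beta>)"
  unfolding cost_def by (simp add: comp_def)

lemma swaps_cost: "swaps_ok n \<beta> \<Longrightarrow> sum_list (map action_cost \<beta>) = length \<beta>"
  unfolding swaps_ok_def by (induction \<beta>) auto

lemma covers_app: "j < length B \<Longrightarrow> covers L0 (B @ T) r j = covers L0 B r j"
proof -
  assume j: "j < length B"
  then have e: "(B @ T) ! j = B ! j" "take j (B @ T) = take j B" by (auto simp: nth_append)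
  show ?thesis unfolding covers_def config_def e using j by simp
qed

lemma serves_app: "j < length B \<Longrightarrow> serves L0 (B @ T) r j = serves L0 B r j"
  unfolding serves_def using covers_app[of _ B L0 T r] by auto

lemma serves_len: "serves L0 B r j \<Longrightarrow> j < length B"
  unfolding serves_def covers_def by simp

lemma covers_serves: "covers L0 B r j \<Longrightarrow> \<exists>j0\<le>j. serves L0 B r j0"
proof -
  assume c: "covers L0 B r j"
  let ?j0 = "LEAST j. covers L0 B r j"
  have "covers L0 B r ?j0" using c by (rule LeastI)
  moreover have "\<forall>j'<?j0. \<not> covers L0 B r j'" using not_less_Least by blast
  moreover have "?j0 \<le> j" using c by (rule Least_le)
  ultimately show ?thesis unfolding serves_def by blast
qed

lemma config_app: "config L0 (B @ T) (length B + j) = fold (apply_action \<circ> snd) (take j T) (config L0 B (length B))"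
  unfolding config_def by simp

lemma covers_app2: "covers L0 (B @ T) r (length B + j) =
   (j < length T \<and> (case snd (T ! j) of Access i \<Rightarrow> arr r \<le> fst (T ! j) \<and> pos (elem r) (fold (apply_action \<circ> snd) (take j T) (config L0 B (length B))) \<le> i
      | Swap _ \<Rightarrow> False))"
proof -
  have e: "(B @ T) ! (length B + j) = T ! j" by simp
  show ?thesis unfolding covers_def config_app e by simp
qed



lemma cov_sub: "\<forall>a\<in>set \<alpha>. action_ok (length x) a \<Longrightarrow> cov \<alpha> x \<subseteq> set x"
proof (induction \<alpha> arbitrary: x)
  case Nil then show ?case by simp
next
  case (Cons a \<alpha>)
  have ok: "action_ok (length x) a" using Cons.prems by simp
  note p = apply_ok[OF ok]
  have "\<forall>b\<in>set \<alpha>. action_ok (length (apply_action a x)) b" using Cons.prems p by simp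
  then have "cov \<alpha> (apply_action a x) \<subseteq> set (apply_action a x)" by (rule Cons.IH)
  then have "cov \<alpha> (apply_action a x) \<subseteq> set x" using p by simp
  moreover have "(case a of Access i \<Rightarrow> set (take i x) | Swap i \<Rightarrow> {}) \<subseteq> set x"
    by (cases a) (auto dest: in_set_takeD)
  ultimately show ?case by simp
qed

definition blk :: "'a list \<Rightarrow> 'a list \<Rightarrow> 'a set \<Rightarrow> real \<Rightarrow> schedule" where
  "blk c c' W \<tau> = (let P = Qs c c' W; m = mpart P c';
     \<beta>1 = (SOME \<beta>. swaps_ok (length c) \<beta> \<and> fold apply_action \<beta> c = m \<and> length \<beta> \<le> invc c m);
     \<beta>2 = (SOME \<beta>. swaps_ok (length m) \<beta> \<and> fold apply_action \<beta> m = c' \<and> length \<beta> \<le> invc m c')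
    in map (\<lambda>a. (\<tau>,a)) (\<beta>1 @ [Access (card P)] @ \<beta>2))"

lemma blk_props:
  assumes dc: "distinct c" and dc': "distinct c'" and s: "set c' = set c" and W: "W \<subseteq> set c"
  obtains \<beta>1 \<beta>2 where
    "blk c c' W \<tau> = map (\<lambda>a. (\<tau>,a)) (\<beta>1 @ [Access (card (Qs c c' W))] @ \<beta>2)"
    "swaps_ok (length c) \<beta>1" "swaps_ok (length c) \<beta>2"
    "fold apply_action \<beta>1 c = mpart (Qs c c' W) c'"
    "fold apply_action \<beta>2 (mpart (Qs c c' W) c') = c'"
    "length \<beta>1 + length \<beta>2 \<le> invc c c'"
proof -
  define P where "P = Qs c c' W"
  define m where "m = mpart P c'"
  have dm: "distinct m" "set m = set c" "length m = length c'" using mpart_props[OF dc'] s unfolding m_def by auto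
  have lc: "length c' = length c" using dc dc' s by (metis distinct_card)
  have ex1: "\<exists>\<beta>. swaps_ok (length c) \<beta> \<and> fold apply_action \<beta> c = m \<and> length \<beta> \<le> invc c m"
    using sort_swaps[OF dc dm(1)] dm(2) by simp
  have ex2: "\<exists>\<beta>. swaps_ok (length m) \<beta> \<and> fold apply_action \<beta> m = c' \<and> length \<beta> \<le> invc m c'"
    using sort_swaps[OF dm(1) dc'] dm(2) s by simp
  define \<beta>1 where "\<beta>1 = (SOME \<beta>. swaps_ok (length c) \<beta> \<and> fold apply_action \<beta> c = m \<and> length \<beta> \<le> invc c m)"
  define \<beta>2 where "\<beta>2 = (SOME \<beta>. swaps_ok (length m) \<beta> \<and> fold apply_action \<beta> m = c' \<and> length \<beta> \<le> invc m c')"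
  have h1: "swaps_ok (length c) \<beta>1 \<and> fold apply_action \<beta>1 c = m \<and> length \<beta>1 \<le> invc c m"
    unfolding \<beta>1_def by (rule someI_ex[OF ex1])
  have h2: "swaps_ok (length m) \<beta>2 \<and> fold apply_action \<beta>2 m = c' \<and> length \<beta>2 \<le> invc m c'"
    unfolding \<beta>2_def by (rule someI_ex[OF ex2])
  have pi: "invc c m + invc m c' \<le> invc c c'"
    unfolding m_def by (rule partition_inv[OF dc dc' s P_def])
  have b: "blk c c' W \<tau> = map (\<lambda>a. (\<tau>,a)) (\<beta>1 @ [Access (card P)] @ \<beta>2)"
    unfolding blk_def P_def[symmetric] m_def[symmetric] \<beta>1_def[symmetric] \<beta>2_def[symmetric] Let_def ..
  show ?thesis
    apply (rule that[of \<beta>1 \<beta>2])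
    using b h1 h2 pi dm lc unfolding P_def m_def by auto
qed

lemma fold_pair: "fold (\<lambda>y. apply_action (snd y)) (map (\<lambda>a. (\<tau>,a)) \<beta>) x = fold apply_action \<beta> x"
  by (induction \<beta> arbitrary: x) auto

lemma blk_struct:
  assumes T: "T = map (\<lambda>a. (\<tau>,a)) (\<beta>1 @ [Access p] @ \<beta>2)" and s1: "swaps_ok n \<beta>1" and s2: "swaps_ok n \<beta>2"
  shows "length T = length \<beta>1 + Suc (length \<beta>2)"
    "\<forall>j<length T. fst (T!j) = \<tau>"
    "T ! (length \<beta>1) = (\<tau>, Access p)"
    "\<forall>j<length T. j \<noteq> length \<beta>1 \<longrightarrow> (\<exists>i. snd (T!j) = Swap i \<and> 1 \<le> i \<and> i < n)"
    "take (length \<beta>1) T = map (\<lambda>a. (\<tau>,a)) \<beta>1"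
    "fold (apply_action \<circ> snd) T x = fold apply_action \<beta>2 (fold apply_action \<beta>1 x)"
    "cost T = length \<beta>1 + p + length \<beta>2"
    "\<forall>y\<in>set T. action_ok n (snd y) \<or> snd y = Access p"
proof -
  show "length T = length \<beta>1 + Suc (length \<beta>2)" using T by simp
  have "\<forall>y\<in>set T. fst y = \<tau>" using T by auto
  then show "\<forall>j<length T. fst (T!j) = \<tau>" using nth_mem by blast
  show "T ! (length \<beta>1) = (\<tau>, Access p)" using T by (simp add: nth_append)
  show "\<forall>j<length T. j \<noteq> length \<beta>1 \<longrightarrow> (\<exists>i. snd (T!j) = Swap i \<and> 1 \<le> i \<and> i < n)"
  proof (intro allI impI)
    fix j assume j: "j < length T" "j \<noteq> length \<beta>1"
    show "\<exists>i. snd (T!j) = Swap i \<and> 1 \<le> i \<and> i < n"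
    proof (cases "j < length \<beta>1")
      case True
      then have "snd (T!j) = \<beta>1!j" using T by (simp add: nth_append)
      moreover have "\<beta>1!j \<in> set \<beta>1" using True by simp
      ultimately show ?thesis using s1 unfolding swaps_ok_def by metis
    next
      case False
      then have jj: "j - Suc (length \<beta>1) < length \<beta>2" using j T by simp
      have "snd (T!j) = \<beta>2!(j - Suc (length \<beta>1))" using T False j(2) jj by (simp add: nth_append)
      moreover have "\<beta>2!(j - Suc (length \<beta>1)) \<in> set \<beta>2" using jj by simp
      ultimately show ?thesis using s2 unfolding swaps_ok_def by metis
    qed
  qed
  show "take (length \<beta>1) T = map (\<lambda>a. (\<tau>,a)) \<beta>1" using T by simp
  show "fold (apply_action \<circ> snd) T x = fold apply_action \<beta>2 (fold apply_action \<beta>1 x)"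
    using T unfolding comp_def by (simp add: fold_pair)
  show "cost T = length \<beta>1 + p + length \<beta>2"
    using T swaps_cost[OF s1] swaps_cost[OF s2] unfolding cost_def by (simp add: comp_def)
  show "\<forall>y\<in>set T. action_ok n (snd y) \<or> snd y = Access p"
    using T s1 s2 unfolding swaps_ok_def by auto
qed



fun build :: "'a list \<Rightarrow> 'a request list \<Rightarrow> schedule \<Rightarrow> real list \<Rightarrow> schedule \<Rightarrow> nat \<Rightarrow> schedule" where
  "build L0 \<sigma> S [] B Np = B"
| "build L0 \<sigma> S (\<tau>#ds) B Np = (if (\<exists>r\<in>set \<sigma>. dl r = \<tau> \<and> \<not>(\<exists>j. covers L0 B r j))
     then build L0 \<sigma> S ds (B @ blk (config L0 S Np) (config L0 S (NA S \<tau>))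
               (cov (map snd (drop Np (take (NA S \<tau>) S))) (config L0 S Np)) \<tau>) (NA S \<tau>)
     else build L0 \<sigma> S ds B Np)"

definition INV :: "'a list \<Rightarrow> 'a request list \<Rightarrow> schedule \<Rightarrow> real list \<Rightarrow> schedule \<Rightarrow> nat \<Rightarrow> bool" where
  "INV L0 \<sigma> S ds B Np \<longleftrightarrow>
    sched_ok (length L0) B \<and>
    (\<forall>x\<in>set B. \<forall>\<tau>\<in>set ds. fst x < \<tau>) \<and>
    config L0 B (length B) = config L0 S Np \<and>
    (\<forall>\<tau>\<in>set ds. Np \<le> NA S \<tau>) \<and> Np \<le> length S \<and>
    cost B \<le> cost (take Np S) \<and>
    (\<forall>r\<in>set \<sigma>. \<forall>k<Np. covers L0 S r k \<longrightarrow> (\<exists>j. covers L0 B r j)) \<and>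
    deadline_lazy L0 \<sigma> B \<and>
    (\<forall>r\<in>set \<sigma>. dl r \<notin> set ds \<longrightarrow> (\<exists>j. serves L0 B r j \<and> fst (B!j) \<le> dl r))"

lemma covered_served:
  assumes "\<forall>x\<in>set B. fst x < \<tau>" "covers L0 B r j"
  shows "\<exists>j. serves L0 B r j \<and> fst (B!j) \<le> \<tau>"
proof -
  obtain j0 where j0: "j0 \<le> j" "serves L0 B r j0" using covers_serves[OF assms(2)] by blast
  have "j0 < length B" using serves_len[OF j0(2)] .
  then have "fst (B!j0) < \<tau>" using assms(1) nth_mem by blast
  then show ?thesis using j0 by (intro exI[of _ j0]) simp
qed

lemma step_false:
  assumes I: "INV L0 \<sigma> S (\<tau>#ds) B Np" and nc: "\<not>(\<exists>r\<in>set \<sigma>. dl r = \<tau> \<and> \<not>(\<exists>j. covers L0 B r j))"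
  shows "INV L0 \<sigma> S ds B Np"
proof -
  have t: "\<forall>x\<in>set B. fst x < \<tau>" using I unfolding INV_def by simp
  have "\<forall>r\<in>set \<sigma>. dl r \<notin> set ds \<longrightarrow> (\<exists>j. serves L0 B r j \<and> fst (B!j) \<le> dl r)"
  proof (intro ballI impI)
    fix r assume r: "r \<in> set \<sigma>" "dl r \<notin> set ds"
    show "\<exists>j. serves L0 B r j \<and> fst (B!j) \<le> dl r"
    proof (cases "dl r = \<tau>")
      case True
      then obtain j where "covers L0 B r j" using nc r by blast
      then show ?thesis using covered_served[OF t] True by simp
    next
      case False
      then show ?thesis using I r unfolding INV_def by simp
    qed
  qed
  then show ?thesis using I unfolding INV_def by simp
qed



lemma step_true:
  assumes dL: "distinct L0" and wf: "wf_input L0 \<sigma>" and vS: "valid L0 \<sigma> S"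
    and srt: "sorted_wrt (<) (\<tau>#ds)" and I: "INV L0 \<sigma> S (\<tau>#ds) B Np"
    and r0: "r0 \<in> set \<sigma>" "dl r0 = \<tau>" "\<not>(\<exists>j. covers L0 B r0 j)"
  shows "INV L0 \<sigma> S ds (B @ blk (config L0 S Np) (config L0 S (NA S \<tau>))
               (cov (map snd (drop Np (take (NA S \<tau>) S))) (config L0 S Np)) \<tau>) (NA S \<tau>)"
proof -
  define n where "n = length L0"
  define N where "N = NA S \<tau>"
  define c where "c = config L0 S Np"
  define c' where "c' = config L0 S N"
  define \<alpha> where "\<alpha> = map snd (drop Np (take N S))"
  define W where "W = cov \<alpha> c"
  define P where "P = Qs c c' W"
  define m where "m = mpart P c'"
  define T where "T = blk c c' W \<tau>"
  have geq: "blk (config L0 S Np) (config L0 S (NA S \<tau>))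
               (cov (map snd (drop Np (take (NA S \<tau>) S))) (config L0 S Np)) \<tau> = T"
    unfolding T_def W_def \<alpha>_def c_def c'_def N_def ..
  have I1: "sched_ok n B" and I2: "\<forall>x\<in>set B. \<forall>\<tau>'\<in>set (\<tau>#ds). fst x < \<tau>'"
    and I3: "config L0 B (length B) = c" and I4: "\<forall>\<tau>'\<in>set (\<tau>#ds). Np \<le> NA S \<tau>'"
    and I5: "Np \<le> length S" and I6: "cost B \<le> cost (take Np S)"
    and I7: "\<forall>r\<in>set \<sigma>. \<forall>k<Np. covers L0 S r k \<longrightarrow> (\<exists>j. covers L0 B r j)"
    and I8: "deadline_lazy L0 \<sigma> B"
    and I9: "\<forall>r\<in>set \<sigma>. dl r \<notin> set (\<tau>#ds) \<longrightarrow> (\<exists>j. serves L0 B r j \<and> fst (B!j) \<le> dl r)"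
    using I unfolding INV_def n_def c_def by auto
  have sS: "sched_ok n S" using vS unfolding valid_def n_def by simp
  have srtS: "sorted (map fst S)" using sS unfolding sched_ok_def by simp
  have okS: "\<forall>x\<in>set S. action_ok n (snd x)" using sS unfolding sched_ok_def by simp
  have NpN: "Np \<le> N" using I4 unfolding N_def by simp
  have Nl: "N \<le> length S" unfolding N_def by (rule NA_le_len)
  have cp: "length c = n" "set c = set L0" "distinct c"
    using config_props[OF sS[unfolded n_def] dL] unfolding c_def n_def by auto
  have cp': "length c' = n" "set c' = set L0" "distinct c'"
    using config_props[OF sS[unfolded n_def] dL] unfolding c'_def n_def by auto
  have lenA: "length \<alpha> = N - Np" unfolding \<alpha>_def using Nl NpN by simp
  have aok: "\<forall>a\<in>set \<alpha>. action_ok (length c) a"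
  proof
    fix a assume "a \<in> set \<alpha>"
    then obtain x where x: "x \<in> set (drop Np (take N S))" "a = snd x" unfolding \<alpha>_def by auto
    have "x \<in> set S" using x(1) by (meson in_set_dropD in_set_takeD)
    then show "action_ok (length c) a" using okS x(2) cp(1) by simp
  qed
  have c'eq: "c' = fold apply_action \<alpha> c"
    using config_window[OF NpN order_refl, of L0 S] lenA unfolding c'_def c_def \<alpha>_def by simp
  have Wsub: "W \<subseteq> set c" unfolding W_def by (rule cov_sub[OF aok])
  have WP: "W \<subseteq> P" unfolding P_def Qs_def by blast
  have Psub: "P \<subseteq> set c" using Qs_sub[of c c' W] Wsub unfolding P_def by blast
  have win: "invc c c' + card P \<le> sum_list (map action_cost \<alpha>)"
    using window[OF cp(3) aok] unfolding P_def W_def c'eq .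
  have scc: "set c' = set c" using cp cp' by simp
  obtain \<beta>1 \<beta>2 where bp: "blk c c' W \<tau> = map (\<lambda>a. (\<tau>,a)) (\<beta>1 @ [Access (card P)] @ \<beta>2)"
    "swaps_ok (length c) \<beta>1" "swaps_ok (length c) \<beta>2"
    "fold apply_action \<beta>1 c = m" "fold apply_action \<beta>2 m = c'"
    "length \<beta>1 + length \<beta>2 \<le> invc c c'"
    using blk_props[OF cp(3) cp'(3) scc Wsub, of \<tau>] unfolding P_def m_def by blast
  have Teq: "T = map (\<lambda>a. (\<tau>,a)) (\<beta>1 @ [Access (card P)] @ \<beta>2)" using bp(1) unfolding T_def .
  have s1: "swaps_ok n \<beta>1" "swaps_ok n \<beta>2" using bp(2,3) cp(1) by auto
  note bs = blk_struct[OF Teq s1]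
  define J where "J = length B + length \<beta>1"
  have TJ: "(B @ T) ! J = (\<tau>, Access (card P))" unfolding J_def using bs(3) by (simp add: nth_append)
  have cfgJ: "fold (apply_action \<circ> snd) (take (length \<beta>1) T) (config L0 B (length B)) = m"
    using bs(5) I3 bp(4) fold_pair[of \<tau> \<beta>1 c] unfolding comp_def by simp
  have mP: "set (take (card P) m) = P"
    using mpart_props(4)[OF cp'(3), of P] Psub scc unfolding m_def by simp
  have C: "covers L0 (B @ T) r J" if r: "r \<in> set \<sigma>" "Np \<le> k" "k < N" "covers L0 S r k" for r k
  proof -
    have kl: "k < length S" using r(4) unfolding covers_def by simp
    obtain i where si: "snd (S!k) = Access i" and ar: "arr r \<le> fst (S!k)"
        and po: "pos (elem r) (config L0 S k) \<le> i"
      using r(4) unfolding covers_def by (cases "snd (S!k)") auto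
    have er: "elem r \<in> set L0" using wf r(1) unfolding wf_input_def by simp
    have cfk: "set (config L0 S k) = set L0" using config_props[OF sS[unfolded n_def] dL] by simp
    have e1: "elem r \<in> set (take i (config L0 S k))" using pos_le_take[OF _ po] er cfk by simp
    have ck: "config L0 S k = fold apply_action (take (k - Np) \<alpha>) c"
      using config_window[OF r(2) less_imp_le[OF r(3)], of L0 S] unfolding \<alpha>_def c_def .
    have kk: "k - Np < length \<alpha>" using lenA r(2,3) by simp
    have ak: "\<alpha> ! (k - Np) = Access i"
    proof -
      have "\<alpha> ! (k - Np) = snd (drop Np (take N S) ! (k - Np))" using kk unfolding \<alpha>_def by simp
      also have "drop Np (take N S) ! (k - Np) = S ! k" using r(2,3) Nl by simp
      finally show ?thesis using si by simp
    qed
    have e2: "elem r \<in> set (take i (fold apply_action (take (k - Np) \<alpha>) c))" using e1 ck by simp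
    have "elem r \<in> W" using cov_take[OF kk ak, of c] e2 unfolding W_def by (rule subsetD)
    then have "elem r \<in> set (take (card P) m)" using WP mP by blast
    then have pm: "pos (elem r) m \<le> card P" by (rule take_pos_le)
    have tk: "fst (S!k) \<le> \<tau>" using NA_time[of k S \<tau>] r(3) unfolding N_def by simp
    have "length \<beta>1 < length T" using bs(1) by simp
    then show ?thesis unfolding J_def covers_app2 using bs(3) ar tk pm cfgJ by simp
  qed
  have noearly: "\<not> covers L0 (B @ T) r j" if "j < J" "\<not>(\<exists>j. covers L0 B r j)" for r j
  proof (cases "j < length B")
    case True
    have "covers L0 (B @ T) r j = covers L0 B r j" by (rule covers_app[OF True])
    then show ?thesis using that(2) by blast
  next
    case False
    define j' where "j' = j - length B"
    have j': "j = length B + j'" "j' < length \<beta>1" using False that(1) unfolding J_def j'_def by auto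
    have "j' < length T" "j' \<noteq> length \<beta>1" using j'(2) bs(1) by auto
    then obtain i where "snd (T ! j') = Swap i" using bs(4) by blast
    then show ?thesis unfolding j'(1) covers_app2 by simp
  qed
  have D: "serves L0 (B @ T) r J" if r: "r \<in> set \<sigma>" "dl r = \<tau>" "\<not>(\<exists>j. covers L0 B r j)" for r
  proof -
    obtain k where k: "serves L0 S r k" "fst (S!k) \<le> dl r" using vS r(1) unfolding valid_def by blast
    have ck: "covers L0 S r k" using k(1) unfolding serves_def by simp
    have kl: "k < length S" using ck unfolding covers_def by simp
    have kN: "k < N" using NA_ge[OF srtS kl] k(2) r(2) unfolding N_def by simp
    have kNp: "Np \<le> k"
    proof (rule ccontr)
      assume "\<not> Np \<le> k"
      then have "k < Np" by simp
      then have "covers L0 S r k \<longrightarrow> (\<exists>j. covers L0 B r j)" using I7 r(1) by simp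
      then show False using ck r(3) by blast
    qed
    have "covers L0 (B @ T) r J" using C[OF r(1) kNp kN ck] .
    moreover have "\<forall>j<J. \<not> covers L0 (B @ T) r j" using noearly r(3) by blast
    ultimately show ?thesis unfolding serves_def by blast
  qed
  have tB: "\<forall>x\<in>set B. fst x < \<tau>" using I2 by simp
  have tT: "\<forall>y\<in>set T. fst y = \<tau>" using bs(2) by (metis in_set_conv_nth)
  have cardP: "1 \<le> card P" "card P \<le> n"
  proof -
    have "serves L0 (B @ T) r0 J" using D[OF r0] .
    have "elem r0 \<in> P"
    proof -
      obtain k where k: "serves L0 S r0 k" "fst (S!k) \<le> dl r0" using vS r0(1) unfolding valid_def by blast
      have ck: "covers L0 S r0 k" using k(1) unfolding serves_def by simp
      have kl: "k < length S" using ck unfolding covers_def by simp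
      have kN: "k < N" using NA_ge[OF srtS kl] k(2) r0(2) unfolding N_def by simp
      have kNp: "Np \<le> k"
      proof (rule ccontr)
        assume "\<not> Np \<le> k"
        then have "k < Np" by simp
        then have "covers L0 S r0 k \<longrightarrow> (\<exists>j. covers L0 B r0 j)" using I7 r0(1) by simp
        then show False using ck r0(3) by blast
      qed
      have "covers L0 (B @ T) r0 J" using C[OF r0(1) kNp kN ck] .
      then have "pos (elem r0) m \<le> card P" unfolding J_def covers_app2 using bs(3) cfgJ by simp
      moreover have "elem r0 \<in> set m"
        using wf r0(1) mpart_props(2)[OF cp'(3)] cp' unfolding wf_input_def m_def by simp
      ultimately have "elem r0 \<in> set (take (card P) m)" by (rule pos_le_take[rotated])
      then show ?thesis using mP by simp
    qed
    moreover have "finite P" using Psub finite_subset by blast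
    ultimately show "1 \<le> card P" by (metis One_nat_def Suc_leI card_gt_0_iff empty_iff)
    have "card P \<le> card (set c)" using Psub by (intro card_mono) auto
    then show "card P \<le> n" using cp by (metis distinct_card)
  qed
  have J1: "sched_ok n (B @ T)"
  proof -
    have "sorted (map fst T)" using tT by (simp add: sorted_iff_nth_mono)
    moreover have "sorted (map fst B)" using I1 unfolding sched_ok_def by simp
    moreover have "\<forall>x\<in>set B. \<forall>y\<in>set T. fst x \<le> fst y" using tB tT by fastforce
    ultimately have "sorted (map fst (B @ T))" by (simp add: sorted_append)
    moreover have "\<forall>x\<in>set T. action_ok n (snd x)" using bs(8) cardP by auto
    ultimately show ?thesis using I1 unfolding sched_ok_def by auto
  qed
  have J2: "\<forall>x\<in>set (B @ T). \<forall>\<tau>'\<in>set ds. fst x < \<tau>'"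
  proof -
    have lt: "\<forall>\<tau>'\<in>set ds. \<tau> < \<tau>'" using srt by simp
    show ?thesis using I2 lt tT by fastforce
  qed
  have J3: "config L0 (B @ T) (length (B @ T)) = c'"
  proof -
    have "config L0 (B @ T) (length B + length T) = fold (apply_action \<circ> snd) T (config L0 B (length B))"
      using config_app[of L0 B T "length T"] by simp
    also have "\<dots> = fold apply_action \<beta>2 (fold apply_action \<beta>1 c)" unfolding I3 by (rule bs(6))
    also have "\<dots> = c'" using bp(4,5) by simp
    finally show ?thesis by simp
  qed
  have J4: "\<forall>\<tau>'\<in>set ds. N \<le> NA S \<tau>'"
  proof
    fix \<tau>' assume "\<tau>' \<in> set ds"
    then have "\<tau> \<le> \<tau>'" using srt by (simp add: less_imp_le)
    then show "N \<le> NA S \<tau>'" unfolding N_def by (rule NA_mono[OF srtS])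
  qed
  have J6: "cost (B @ T) \<le> cost (take N S)"
  proof -
    have "cost (B @ T) = cost B + (length \<beta>1 + card P + length \<beta>2)" using bs(7) cost_append by simp
    also have "\<dots> \<le> cost (take Np S) + sum_list (map action_cost \<alpha>)" using I6 bp(6) win by simp
    also have "\<dots> = cost (take N S)" using cost_window[OF NpN, of S] unfolding \<alpha>_def by simp
    finally show ?thesis .
  qed
  have J7: "\<forall>r\<in>set \<sigma>. \<forall>k<N. covers L0 S r k \<longrightarrow> (\<exists>j. covers L0 (B @ T) r j)"
  proof (intro ballI allI impI)
    fix r k assume r: "r \<in> set \<sigma>" "k < N" "covers L0 S r k"
    show "\<exists>j. covers L0 (B @ T) r j"
    proof (cases "k < Np")
      case True
      have h: "covers L0 S r k \<longrightarrow> (\<exists>j. covers L0 B r j)" using I7 r(1) True by simp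
      then obtain j where j: "covers L0 B r j" using r(3) by blast
      then have "j < length B" unfolding covers_def by simp
      then show ?thesis using j covers_app by blast
    next
      case False then show ?thesis using C[OF r(1) _ r(2,3)] by auto
    qed
  qed
  have J8: "deadline_lazy L0 \<sigma> (B @ T)"
    unfolding deadline_lazy_def
  proof (intro allI impI)
    fix j assume j: "j < length (B @ T)" and ex: "\<exists>r\<in>set \<sigma>. serves L0 (B @ T) r j"
    show "\<exists>r\<in>set \<sigma>. serves L0 (B @ T) r j \<and> dl r = fst ((B @ T) ! j)"
    proof (cases "j < length B")
      case True
      then have "\<exists>r\<in>set \<sigma>. serves L0 B r j" using ex serves_app by blast
      then obtain r where rr: "r \<in> set \<sigma>" "serves L0 B r j" "dl r = fst (B ! j)"
        using I8 True unfolding deadline_lazy_def by blast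
      have "serves L0 (B @ T) r j" using serves_app[OF True, of L0 T r] rr(2) by simp
      moreover have "(B @ T) ! j = B ! j" using True by (simp add: nth_append)
      ultimately show ?thesis using rr by auto
    next
      case False
      define j' where "j' = j - length B"
      have j': "j = length B + j'" using False unfolding j'_def by simp
      have jJ: "j = J"
      proof (rule ccontr)
        assume "j \<noteq> J"
        then have "j' \<noteq> length \<beta>1" unfolding J_def j' by simp
        moreover have "j' < length T" using j j' by simp
        ultimately obtain i where "snd (T ! j') = Swap i" using bs(4) by blast
        then have "\<And>r. \<not> covers L0 (B @ T) r j" unfolding j' covers_app2 by simp
        then show False using ex unfolding serves_def by blast
      qed
      have "serves L0 (B @ T) r0 J" using D[OF r0] .
      then show ?thesis using jJ TJ r0 by auto
    qed
  qed
  have J9: "\<forall>r\<in>set \<sigma>. dl r \<notin> set ds \<longrightarrow> (\<exists>j. serves L0 (B @ T) r j \<and> fst ((B @ T)!j) \<le> dl r)"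
  proof (intro ballI impI)
    fix r assume r: "r \<in> set \<sigma>" "dl r \<notin> set ds"
    show "\<exists>j. serves L0 (B @ T) r j \<and> fst ((B @ T)!j) \<le> dl r"
    proof (cases "dl r = \<tau>")
      case True
      show ?thesis
      proof (cases "\<exists>j. covers L0 B r j")
        case True
        then obtain j where "covers L0 B r j" by blast
        then obtain j0 where j0: "serves L0 B r j0" "fst (B!j0) \<le> \<tau>" using covered_served[OF tB] by blast
        have l: "j0 < length B" using serves_len[OF j0(1)] .
        show ?thesis using j0 l serves_app[OF l, of L0 T r] \<open>dl r = \<tau>\<close> by (intro exI[of _ j0]) (simp add: nth_append)
      next
        case False
        then show ?thesis using D[OF r(1) \<open>dl r = \<tau>\<close> False] TJ \<open>dl r = \<tau>\<close> by auto
      qed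
    next
      case False
      then have "dl r \<notin> set (\<tau>#ds)" using r(2) by simp
      then obtain j where j: "serves L0 B r j" "fst (B!j) \<le> dl r" using I9 r(1) by blast
      have l: "j < length B" using serves_len[OF j(1)] .
      show ?thesis using j l serves_app[OF l, of L0 T r] by (intro exI[of _ j]) (simp add: nth_append)
    qed
  qed
  have "INV L0 \<sigma> S ds (B @ T) N"
    unfolding INV_def using J1 J2 J3 J4 Nl J6 J7 J8 J9 unfolding n_def c'_def by auto
  then show ?thesis unfolding geq N_def .
qed



lemma build_INV:
  assumes dL: "distinct L0" and wf: "wf_input L0 \<sigma>" and vS: "valid L0 \<sigma> S"
  shows "sorted_wrt (<) ds \<Longrightarrow> INV L0 \<sigma> S ds B Np \<Longrightarrow> \<exists>Np'. INV L0 \<sigma> S [] (build L0 \<sigma> S ds B Np) Np'"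
proof (induction ds arbitrary: B Np)
  case Nil then show ?case by auto
next
  case (Cons \<tau> ds)
  have st: "sorted_wrt (<) ds" using Cons.prems(1) by simp
  show ?case
  proof (cases "\<exists>r\<in>set \<sigma>. dl r = \<tau> \<and> \<not>(\<exists>j. covers L0 B r j)")
    case True
    then obtain r0 where r0: "r0 \<in> set \<sigma>" "dl r0 = \<tau>" "\<not>(\<exists>j. covers L0 B r0 j)" by blast
    have IV: "INV L0 \<sigma> S ds (B @ blk (config L0 S Np) (config L0 S (NA S \<tau>))
               (cov (map snd (drop Np (take (NA S \<tau>) S))) (config L0 S Np)) \<tau>) (NA S \<tau>)"
      by (rule step_true[OF dL wf vS Cons.prems(1,2) r0])
    have e: "build L0 \<sigma> S (\<tau>#ds) B Np = build L0 \<sigma> S ds (B @ blk (config L0 S Np) (config L0 S (NA S \<tau>))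
               (cov (map snd (drop Np (take (NA S \<tau>) S))) (config L0 S Np)) \<tau>) (NA S \<tau>)"
      unfolding build.simps(2) using True by (rule if_P)
    from Cons.IH[OF st IV] show ?thesis unfolding e .
  next
    case False
    have IV: "INV L0 \<sigma> S ds B Np" by (rule step_false[OF Cons.prems(2) False])
    have e: "build L0 \<sigma> S (\<tau>#ds) B Np = build L0 \<sigma> S ds B Np"
      unfolding build.simps(2) using False by (rule if_not_P)
    from Cons.IH[OF st IV] show ?thesis unfolding e .
  qed
qed

lemma INV_init:
  assumes "valid L0 \<sigma> S"
  shows "INV L0 \<sigma> S (sorted_list_of_set (dl ` set \<sigma>)) [] 0"
proof -
  have s: "set (sorted_list_of_set (dl ` set \<sigma>)) = dl ` set \<sigma>" by simp
  have c: "config L0 [] 0 = config L0 S 0" unfolding config_def by simp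
  have sk: "sched_ok (length L0) []" unfolding sched_ok_def by simp
  have cz: "cost [] = 0" unfolding cost_def by simp
  have dz: "deadline_lazy L0 \<sigma> []" unfolding deadline_lazy_def by simp
  show ?thesis unfolding INV_def s using c sk cz dz by auto
qed

lemma INV_final:
  assumes "INV L0 \<sigma> S [] B Np"
  shows "valid L0 \<sigma> B \<and> deadline_lazy L0 \<sigma> B \<and> cost B \<le> cost S"
proof -
  have "cost B \<le> cost (take Np S)" using assms unfolding INV_def by simp
  also have "\<dots> \<le> cost S" by (rule cost_take_le)
  finally show ?thesis using assms unfolding INV_def valid_def by auto
qed

theorem mainTheorem7:
  fixes L0 :: "'a list" and A :: "'a request list \<Rightarrow> schedule"
  assumes "distinct L0"
    and "\<forall>\<sigma>. wf_input L0 \<sigma> \<longrightarrow> valid L0 \<sigma> (A \<sigma>)"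
  shows "\<exists>B :: 'a request list \<Rightarrow> schedule. \<forall>\<sigma>. wf_input L0 \<sigma> \<longrightarrow>
           valid L0 \<sigma> (B \<sigma>) \<and> deadline_lazy L0 \<sigma> (B \<sigma>) \<and> cost (B \<sigma>) \<le> cost (A \<sigma>)"
proof (intro exI allI impI)
  fix \<sigma> assume wf: "wf_input L0 \<sigma>"
  have vS: "valid L0 \<sigma> (A \<sigma>)" using assms(2) wf by blast
  have srt: "sorted_wrt (<) (sorted_list_of_set (dl ` set \<sigma>))" by (rule strict_sorted_list_of_set)
  obtain Np' where "INV L0 \<sigma> (A \<sigma>) [] (build L0 \<sigma> (A \<sigma>) (sorted_list_of_set (dl ` set \<sigma>)) [] 0) Np'"
    using build_INV[OF assms(1) wf vS srt INV_init[OF vS]] by blast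
  from INV_final[OF this]
  show "valid L0 \<sigma> (build L0 \<sigma> (A \<sigma>) (sorted_list_of_set (dl ` set \<sigma>)) [] 0) \<and>
        deadline_lazy L0 \<sigma> (build L0 \<sigma> (A \<sigma>) (sorted_list_of_set (dl ` set \<sigma>)) [] 0) \<and>
        cost (build L0 \<sigma> (A \<sigma>) (sorted_list_of_set (dl ` set \<sigma>)) [] 0) \<le> cost (A \<sigma>)" .
qed


end
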